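(* Let $\boldsymbol{x}\in\mathbb{R}^d$ be a random vector with distribution $p(\boldsymbol{x})$ and let $\boldsymbol{z}\sim\mathcal N(\mathbf 0,\mathbf I)$ be independent of $\boldsymbol{x}$. Let $\{S_j\}_{j=1}^k$ be a partition of the index set $\{1,\dots,d\}$, and for each $j$ let $0\le t_{\text{start}_j}<t_{\text{end}_j}$ be given such that the intervals $[t_{\text{start}_j},t_{\text{end}_j}]$ for different $j$ do not overlap. Let $\mathbf A(t)$ be the diagonal $d\times d$ matrix whose $i$-th diagonal entry, for $i\in S_j$, is $$\mathbf A(t)_{ii}=\begin{cases}1, & 0\le t\le t_{\text{start}_j},\\ \dfrac{t-t_{\text{end}_j}}{t_{\text{start}_j}-t_{\text{end}_j}}, & t_{\text{start}_j}<t\le t_{\text{end}_j},\\ 0, & t>t_{\text{end}_j},\end{cases}$$ and set $\boldsymbol{x}_t=\mathbf A(t)\boldsymbol{x}+(\mathbf I-\mathbf A(t))\boldsymbol{z}$. Let $\boldsymbol{x}_{\boldsymbol\theta^*}(\boldsymbol{x}_t,t)=\mathbb E[\boldsymbol{x}\mid \boldsymbol{x}_t]$ denote the optimal denoiser (the minimizer over functions $\boldsymbol{x}_{\boldsymbol\theta}$ of $\mathbb E\|\boldsymbol{x}-\boldsymbol{x}_{\boldsymbol\theta}(\boldsymbol{x}_t,t)\|_2^2$), viewed as a function of $\boldsymbol{x}_t$. Then for every $t$ and every group index $j$ with $t_{\text{end}_j}<t$, we have $\frac{\partial}{\partial(\boldsymbol{x}_t)_i}\boldsymbol{x}_{\boldsymbol\theta^*}(\boldsymbol{x}_t,t)=\mathbf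 0$ for all $i\in S_j$.
   Context: This is the "groupwise diffusion" forward process: each group $S_j$ of coordinates of the data is linearly interpolated to independent Gaussian noise during its own time interval $[t_{\text{start}_j},t_{\text{end}_j}]$, and remains data before and pure noise after that interval. $(\boldsymbol{x}_t)_i$ denotes the $i$-th coordinate of $\boldsymbol{x}_t$. *)

theory Defs
  imports "HOL-Probability.Probability"
begin

definition gw_coef :: "real \<Rightarrow> real \<Rightarrow> real \<Rightarrow> real" where
  "gw_coef ts te t = (if t \<le> ts then 1 else if t \<le> te then (t - te) / (ts - te) else 0)"

definition grp_of :: "(nat \<Rightarrow> 'd set) \<Rightarrow> nat \<Rightarrow> 'd \<Rightarrow> nat" where
  "grp_of S k i = (THE j. j < k \<and> i \<in> S j)"

definition gw_A :: "(nat \<Rightarrow> 'd::finite set) \<Rightarrow> nat \<Rightarrow> (nat \<Rightarrow> real) \<Rightarrow> (nat \<Rightarrow> real)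
    \<Rightarrow> real \<Rightarrow> real ^ 'd ^ 'd" where
  "gw_A S k ts te t = (\<chi> r c. if r = c then gw_coef (ts (grp_of S k r)) (te (grp_of S k r)) t else 0)"

definition gw_xt :: "(nat \<Rightarrow> 'd::finite set) \<Rightarrow> nat \<Rightarrow> (nat \<Rightarrow> real) \<Rightarrow> (nat \<Rightarrow> real)
    \<Rightarrow> real \<Rightarrow> real ^ 'd \<Rightarrow> real ^ 'd \<Rightarrow> real ^ 'd" where
  "gw_xt S k ts te t x z = gw_A S k ts te t *v x + (mat 1 - gw_A S k ts te t) *v z"

definition optimal_denoiser ::
  "'a measure \<Rightarrow> ('a \<Rightarrow> real ^ 'd::finite) \<Rightarrow> ('a \<Rightarrow> real ^ 'd) \<Rightarrow> (real ^ 'd \<Rightarrow> real ^ 'd) \<Rightarrow> bool" where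
  "optimal_denoiser M X Xt f \<longleftrightarrow>
     f \<in> borel_measurable borel \<and>
     integrable M (\<lambda>\<omega>. (norm (X \<omega> - f (Xt \<omega>)))\<^sup>2) \<and>
     (\<forall>g \<in> borel_measurable borel. integrable M (\<lambda>\<omega>. (norm (X \<omega> - g (Xt \<omega>)))\<^sup>2) \<longrightarrow>
        (\<integral>\<omega>. (norm (X \<omega> - f (Xt \<omega>)))\<^sup>2 \<partial>M) \<le> (\<integral>\<omega>. (norm (X \<omega> - g (Xt \<omega>)))\<^sup>2 \<partial>M))"

end

theory Submission
  imports Defs
begin

lemma vimage_pair_sigma:
  assumes r: "(\<lambda>\<omega>. (U \<omega>, W \<omega>)) \<in> measurable M (S \<Otimes>\<^sub>M T)"
  shows "{(\<lambda>\<omega>. (U \<omega>, W \<omega>)) -` R \<inter> space M | R. R \<in> sets (S \<Otimes>\<^sub>M T)}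
       = sigma_sets (space M) {(\<lambda>\<omega>. (U \<omega>, W \<omega>)) -` (E \<times> G) \<inter> space M | E G. E \<in> sets S \<and> G \<in> sets T}"
proof -
  have "{(\<lambda>\<omega>. (U \<omega>, W \<omega>)) -` R \<inter> space M | R. R \<in> sets (S \<Otimes>\<^sub>M T)}
      = {(\<lambda>\<omega>. (U \<omega>, W \<omega>)) -` R \<inter> space M | R. R \<in> sigma_sets (space S \<times> space T) {a \<times> b | a b. a \<in> sets S \<and> b \<in> sets T}}"
    by (simp add: sets_pair_measure)
  also have "\<dots> = sigma_sets (space M) {(\<lambda>\<omega>. (U \<omega>, W \<omega>)) -` R \<inter> space M | R. R \<in> {a \<times> b | a b. a \<in> sets S \<and> b \<in> sets T}}"
    by (rule sigma_sets_vimage_commute) (use r in \<open>auto simp: measurable_def space_pair_measure\<close>)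
  also have "{(\<lambda>\<omega>. (U \<omega>, W \<omega>)) -` R \<inter> space M | R. R \<in> {a \<times> b | a b. a \<in> sets S \<and> b \<in> sets T}}
     = {(\<lambda>\<omega>. (U \<omega>, W \<omega>)) -` (E \<times> G) \<inter> space M | E G. E \<in> sets S \<and> G \<in> sets T}"
    by blast
  finally show ?thesis .
qed

lemma Int_stable_rect:
  "Int_stable {(\<lambda>\<omega>. (U \<omega>, W \<omega>)) -` (E \<times> G) \<inter> \<Omega> | E G. E \<in> sets S \<and> G \<in> sets T}"
  unfolding Int_stable_def
proof (intro ballI)
  fix a b assume "a \<in> {(\<lambda>\<omega>. (U \<omega>, W \<omega>)) -` (E \<times> G) \<inter> \<Omega> | E G. E \<in> sets S \<and> G \<in> sets T}"
    "b \<in> {(\<lambda>\<omega>. (U \<omega>, W \<omega>)) -` (E \<times> G) \<inter> \<Omega> | E G. E \<in> sets S \<and> G \<in> sets T}"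
  then obtain E G E' G' where "E \<in> sets S" "G \<in> sets T" "E' \<in> sets S" "G' \<in> sets T"
    "a = (\<lambda>\<omega>. (U \<omega>, W \<omega>)) -` (E \<times> G) \<inter> \<Omega>" "b = (\<lambda>\<omega>. (U \<omega>, W \<omega>)) -` (E' \<times> G') \<inter> \<Omega>"
    by blast
  then show "a \<inter> b \<in> {(\<lambda>\<omega>. (U \<omega>, W \<omega>)) -` (E \<times> G) \<inter> \<Omega> | E G. E \<in> sets S \<and> G \<in> sets T}"
    by (intro CollectI exI[of _ "E \<inter> E'"] exI[of _ "G \<inter> G'"]) auto
qed

lemma indep_pair_assoc:
  fixes A B C :: "'a \<Rightarrow> 'b"
  assumes P: "prob_space M"
  and c: "c \<in> space S1"
  and h1: "prob_space.indep_var M (S1 \<Otimes>\<^sub>M S1) (\<lambda>\<omega>. (A \<omega>, c)) (S2 \<Otimes>\<^sub>M S3) (\<lambda>\<omega>. (B \<omega>, C \<omega>))"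
  and h2: "prob_space.indep_var M S2 B S3 C"
  shows "prob_space.indep_var M (S1 \<Otimes>\<^sub>M S2) (\<lambda>\<omega>. (A \<omega>, B \<omega>)) (S3 \<Otimes>\<^sub>M S1) (\<lambda>\<omega>. (C \<omega>, c))"
proof -
  interpret prob_space M by (rule P)
  have rAc: "random_variable (S1 \<Otimes>\<^sub>M S1) (\<lambda>\<omega>. (A \<omega>, c))" using h1 by (rule indep_var_rv1)
  have rA: "random_variable S1 A" using measurable_compose[OF rAc measurable_fst] by simp
  have rB: "random_variable S2 B" using h2 by (rule indep_var_rv1)
  have rC: "random_variable S3 C" using h2 by (rule indep_var_rv2)
  have rAB: "random_variable (S1 \<Otimes>\<^sub>M S2) (\<lambda>\<omega>. (A \<omega>, B \<omega>))" using rA rB by (rule measurable_Pair)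
  have rCc: "random_variable (S3 \<Otimes>\<^sub>M S1) (\<lambda>\<omega>. (C \<omega>, c))" using rC c by (intro measurable_Pair) auto
  define GV where "GV = {(\<lambda>\<omega>. (A \<omega>, B \<omega>)) -` (E \<times> G) \<inter> space M | E G. E \<in> sets S1 \<and> G \<in> sets S2}"
  define GC where "GC = {(\<lambda>\<omega>. (C \<omega>, c)) -` (E \<times> G) \<inter> space M | E G. E \<in> sets S3 \<and> G \<in> sets S1}"
  have indGV: "indep_set GV GC"
  proof (rule indep_setI)
    show "GV \<subseteq> events" unfolding GV_def using rAB by (auto intro!: measurable_sets)
    show "GC \<subseteq> events" unfolding GC_def using rCc by (auto intro!: measurable_sets)
    fix a b assume "a \<in> GV" "b \<in> GC"
    then obtain E G H K where EG: "E \<in> sets S1" "G \<in> sets S2" "H \<in> sets S3" "K \<in> sets S1"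
      and a: "a = (\<lambda>\<omega>. (A \<omega>, B \<omega>)) -` (E \<times> G) \<inter> space M" and b: "b = (\<lambda>\<omega>. (C \<omega>, c)) -` (H \<times> K) \<inter> space M"
      unfolding GV_def GC_def by blast
    have GH: "G \<times> H \<in> sets (S2 \<Otimes>\<^sub>M S3)" "G \<times> space S3 \<in> sets (S2 \<Otimes>\<^sub>M S3)" using EG by auto
    have ES: "E \<times> space S1 \<in> sets (S1 \<Otimes>\<^sub>M S1)" using EG by auto
    have pA: "(\<lambda>x. (A x, c)) -` (E \<times> space S1) \<inter> space M = A -` E \<inter> space M" using c by auto
    show "prob (a \<inter> b) = prob a * prob b"
    proof (cases "c \<in> K")
      case False
      then have "b = {}" using b by auto
      then show ?thesis by simp
    next
      case True
      then have b': "b = C -` H \<inter> space M" using b by auto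
      have "a \<inter> b = (\<lambda>x. ((A x, c), (B x, C x))) -` ((E \<times> space S1) \<times> (G \<times> H)) \<inter> space M" using a b' c by auto
      hence "prob (a \<inter> b) = prob (A -` E \<inter> space M) * prob ((\<lambda>x. (B x, C x)) -` (G \<times> H) \<inter> space M)"
        using indep_varD[OF h1 ES GH(1)] pA by simp
      also have "prob ((\<lambda>x. (B x, C x)) -` (G \<times> H) \<inter> space M) = prob (B -` G \<inter> space M) * prob b"
        using indep_varD[OF h2 EG(2) EG(3)] b' by simp
      also have "prob a = prob (A -` E \<inter> space M) * prob (B -` G \<inter> space M)"
      proof -
        have "a = (\<lambda>x. ((A x, c), (B x, C x))) -` ((E \<times> space S1) \<times> (G \<times> space S3)) \<inter> space M"
          using a rC c by (auto simp: measurable_def)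
        hence "prob a = prob (A -` E \<inter> space M) * prob ((\<lambda>x. (B x, C x)) -` (G \<times> space S3) \<inter> space M)"
          using indep_varD[OF h1 ES GH(2)] pA by simp
        also have "(\<lambda>x. (B x, C x)) -` (G \<times> space S3) \<inter> space M = B -` G \<inter> space M"
          using rC by (auto simp: measurable_def)
        finally show ?thesis .
      qed
      ultimately show ?thesis by (simp add: ac_simps)
    qed
  qed
  have "Int_stable GV" unfolding GV_def by (rule Int_stable_rect)
  moreover have "Int_stable GC" unfolding GC_def by (rule Int_stable_rect)
  ultimately have "indep_set (sigma_sets (space M) GV) (sigma_sets (space M) GC)"
    using indGV by (intro indep_set_sigma_sets)
  moreover have "sigma_sets (space M) (sigma_sets (space M) GV) = sigma_sets (space M) GV"
    by (rule sigma_sets_sigma_sets_eq) (auto simp: GV_def)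
  moreover have "sigma_sets (space M) (sigma_sets (space M) GC) = sigma_sets (space M) GC"
    by (rule sigma_sets_sigma_sets_eq) (auto simp: GC_def)
  ultimately show ?thesis
    unfolding indep_var_eq vimage_pair_sigma[OF rAB] vimage_pair_sigma[OF rCc] GC_def[symmetric] GV_def[symmetric]
    using rAB rCc by simp
qed

lemma L2_imp_L1:
  fixes f :: "'a \<Rightarrow> real"
  assumes "finite_measure N" "f \<in> borel_measurable N" "integrable N (\<lambda>x. (f x)\<^sup>2)"
  shows "integrable N f"
proof -
  interpret finite_measure N by fact
  have i: "integrable N (\<lambda>x. 1 + (f x)\<^sup>2)" using assms(3) by simp
  have "\<And>y::real. \<bar>y\<bar> \<le> 1 + y\<^sup>2"
  proof -
    fix y :: real
    show "\<bar>y\<bar> \<le> 1 + y\<^sup>2"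
    proof (cases "\<bar>y\<bar> \<le> 1")
      case False
      then have "\<bar>y\<bar> * 1 \<le> \<bar>y\<bar> * \<bar>y\<bar>" by (intro mult_left_mono) auto
      then show ?thesis by (simp add: power2_eq_square)
    qed (simp add: add_increasing2)
  qed
  then have "AE x in N. norm (f x) \<le> norm (1 + (f x)\<^sup>2)" by auto
  then show ?thesis by (rule Bochner_Integration.integrable_bound[OF i assms(2)])
qed

lemma L2_mult:
  fixes f g :: "'a \<Rightarrow> real"
  assumes "f \<in> borel_measurable N" "g \<in> borel_measurable N"
    "integrable N (\<lambda>x. (f x)\<^sup>2)" "integrable N (\<lambda>x. (g x)\<^sup>2)"
  shows "integrable N (\<lambda>x. f x * g x)"
proof -
  have i: "integrable N (\<lambda>x. (f x)\<^sup>2 + (g x)\<^sup>2)" using assms by simp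
  have m: "(\<lambda>x. f x * g x) \<in> borel_measurable N" using assms by simp
  have "\<And>a b::real. \<bar>a * b\<bar> \<le> a\<^sup>2 + b\<^sup>2"
  proof -
    fix a b :: real
    have "2 * \<bar>a\<bar> * \<bar>b\<bar> \<le> \<bar>a\<bar>\<^sup>2 + \<bar>b\<bar>\<^sup>2" by (rule sum_squares_bound)
    moreover have "0 \<le> \<bar>a\<bar> * \<bar>b\<bar>" by simp
    moreover have "\<bar>a\<bar>\<^sup>2 = a\<^sup>2" "\<bar>b\<bar>\<^sup>2 = b\<^sup>2" "\<bar>a * b\<bar> = \<bar>a\<bar> * \<bar>b\<bar>" by (simp_all add: abs_mult)
    ultimately show "\<bar>a * b\<bar> \<le> a\<^sup>2 + b\<^sup>2" by linarith
  qed
  then have "AE x in N. norm (f x * g x) \<le> norm ((f x)\<^sup>2 + (g x)\<^sup>2)" by auto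
  then show ?thesis by (rule Bochner_Integration.integrable_bound[OF i m])
qed

lemma L2_diff:
  fixes f g :: "'a \<Rightarrow> real"
  assumes "f \<in> borel_measurable N" "g \<in> borel_measurable N"
    "integrable N (\<lambda>x. (f x)\<^sup>2)" "integrable N (\<lambda>x. (g x)\<^sup>2)"
  shows "integrable N (\<lambda>x. (f x - g x)\<^sup>2)"
proof -
  have "integrable N (\<lambda>x. (f x)\<^sup>2 + (g x)\<^sup>2 - 2 * (f x * g x))"
    using assms L2_mult[OF assms] by simp
  then show ?thesis by (simp add: power2_diff mult.assoc)
qed

lemma cond_exp_L2_opt:
  fixes Y G :: "'a \<Rightarrow> real"
  assumes P: "prob_space N" and sub: "subalgebra N F"
    and Ym[measurable]: "Y \<in> borel_measurable N" and Y2: "integrable N (\<lambda>x. (Y x)\<^sup>2)"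
    and Gm[measurable]: "G \<in> borel_measurable F" and YG: "integrable N (\<lambda>x. (Y x - G x)\<^sup>2)"
  shows "integrable N (\<lambda>x. (Y x - real_cond_exp N F Y x)\<^sup>2)"
    "(\<integral>x. (Y x - real_cond_exp N F Y x)\<^sup>2 \<partial>N) \<le> (\<integral>x. (Y x - G x)\<^sup>2 \<partial>N)"
proof -
  interpret prob_space N by (rule P)
  interpret finite_measure_subalgebra N F
    by unfold_locales (rule sub)
  define m where "m = real_cond_exp N F Y"
  have mF[measurable]: "m \<in> borel_measurable F" unfolding m_def by simp
  have mN[measurable]: "m \<in> borel_measurable N" unfolding m_def by simp
  have GN[measurable]: "G \<in> borel_measurable N" by (rule measurable_from_subalg[OF sub Gm])
  have Y1: "integrable N Y" by (rule L2_imp_L1) (auto intro: Y2)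
  have m2: "integrable N (\<lambda>x. (m x)\<^sup>2)"
    unfolding m_def
    by (rule integrable_convex_cond_exp[where I=UNIV and q="\<lambda>x. x\<^sup>2"])
       (auto simp: Y1 Y2 convex_power2)
  have G2: "integrable N (\<lambda>x. (G x)\<^sup>2)"
  proof -
    have "integrable N (\<lambda>x. (Y x - (Y x - G x))\<^sup>2)"
      by (rule L2_diff) (auto simp: Y2 YG)
    then show ?thesis by simp
  qed
  have Ym2: "integrable N (\<lambda>x. (Y x - m x)\<^sup>2)" by (rule L2_diff) (auto simp: Y2 m2)
  then show "integrable N (\<lambda>x. (Y x - real_cond_exp N F Y x)\<^sup>2)" unfolding m_def .
  have mG2: "integrable N (\<lambda>x. (m x - G x)\<^sup>2)" by (rule L2_diff) (auto simp: G2 m2)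
  have i1: "integrable N (\<lambda>x. (m x - G x) * Y x)" by (rule L2_mult) (auto simp: mG2 Y2)
  have i2: "integrable N (\<lambda>x. (m x - G x) * m x)" by (rule L2_mult) (auto simp: mG2 m2)
  have cross: "(\<integral>x. (m x - G x) * m x \<partial>N) = (\<integral>x. (m x - G x) * Y x \<partial>N)"
    unfolding m_def
    by (rule real_cond_exp_intg(2)) (use i1 in \<open>auto simp: m_def\<close>)
  have pt: "\<And>x. (Y x - G x)\<^sup>2 = (Y x - m x)\<^sup>2 + (m x - G x)\<^sup>2 + 2 * ((m x - G x) * Y x) - 2 * ((m x - G x) * m x)"
    by (simp add: power2_eq_square algebra_simps)
  have "(\<integral>x. (Y x - G x)\<^sup>2 \<partial>N) = (\<integral>x. (Y x - m x)\<^sup>2 \<partial>N) + (\<integral>x. (m x - G x)\<^sup>2 \<partial>N)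
      + 2 * (\<integral>x. (m x - G x) * Y x \<partial>N) - 2 * (\<integral>x. (m x - G x) * m x \<partial>N)"
    unfolding pt using Ym2 mG2 i1 i2 by simp
  also have "\<dots> = (\<integral>x. (Y x - m x)\<^sup>2 \<partial>N) + (\<integral>x. (m x - G x)\<^sup>2 \<partial>N)" using cross by simp
  also have "\<dots> \<ge> (\<integral>x. (Y x - m x)\<^sup>2 \<partial>N)" by simp
  finally show "(\<integral>x. (Y x - real_cond_exp N F Y x)\<^sup>2 \<partial>N) \<le> (\<integral>x. (Y x - G x)\<^sup>2 \<partial>N)"
    unfolding m_def .
qed

lemma vec_meas:
  fixes f :: "'a \<Rightarrow> real ^ 'd::finite"
  assumes "\<And>c. (\<lambda>\<omega>. f \<omega> $ c) \<in> borel_measurable M"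
  shows "f \<in> borel_measurable M"
proof (subst borel_measurable_euclidean_space, intro ballI)
  fix b :: "real ^ 'd" assume "b \<in> Basis"
  then obtain i where "b = axis i 1" by (auto simp: Basis_vec_def)
  then show "(\<lambda>x. f x \<bullet> b) \<in> borel_measurable M" using assms[of i] by (simp add: inner_axis)
qed

lemma vec_nth_meas[measurable]: "(\<lambda>x::real ^ 'd::finite. x $ c) \<in> borel_measurable borel"
  by (intro borel_measurable_continuous_onI continuous_intros)

lemma sum_single_UNIV:
  fixes g :: "'d::finite \<Rightarrow> real"
  assumes "\<And>j. j \<noteq> i \<Longrightarrow> g j = 0"
  shows "sum g UNIV = g i"
  using assms by (subst sum.remove[of UNIV i]) (auto intro!: sum.neutral)

lemma gw_xt_nth:
  "gw_xt S k ts te t x z $ i =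
     gw_coef (ts (grp_of S k i)) (te (grp_of S k i)) t * x $ i
     + (1 - gw_coef (ts (grp_of S k i)) (te (grp_of S k i)) t) * z $ i"
  unfolding gw_xt_def gw_A_def
  by (simp add: matrix_vector_mult_def mat_def, subst (1 2) sum_single_UNIV[where i=i], auto)

lemma grp_of_eq:
  assumes "j < k" "i \<in> S j" "\<And>j j'. j < k \<Longrightarrow> j' < k \<Longrightarrow> j \<noteq> j' \<Longrightarrow> S j \<inter> S j' = {}"
  shows "grp_of S k i = j"
  unfolding grp_of_def
  using assms by (intro the_equality) auto

lemma normsq_vec: "(norm (v :: real ^ 'd::finite))\<^sup>2 = (\<Sum>c\<in>UNIV. (v $ c)\<^sup>2)"
  unfolding norm_vec_def L2_set_def by (simp add: sum_nonneg)

lemma comp_sq_le: "(v $ c)\<^sup>2 \<le> (norm (v :: real ^ 'd::finite))\<^sup>2"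
  using component_le_norm_cart[of v c] by (metis abs_ge_zero power2_abs power_mono)

lemma exists_opt:
  fixes X W :: "'a \<Rightarrow> real ^ 'd::finite"
  assumes P: "prob_space M" and Xm[measurable]: "X \<in> borel_measurable M"
    and X2: "integrable M (\<lambda>\<omega>. (norm (X \<omega>))\<^sup>2)" and Wm[measurable]: "W \<in> borel_measurable M"
  shows "\<exists>h. optimal_denoiser M X W h"
proof -
  interpret prob_space M by (rule P)
  have WX: "(\<lambda>\<omega>. (W \<omega>, X \<omega>)) \<in> M \<rightarrow>\<^sub>M (borel :: ((real^'d) \<times> (real^'d)) measure)"
    unfolding borel_prod[symmetric] by measurable
  define N where "N = distr M (borel :: ((real^'d) \<times> (real^'d)) measure) (\<lambda>\<omega>. (W \<omega>, X \<omega>))"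
  define F where "F = vimage_algebra (UNIV :: ((real^'d) \<times> (real^'d)) set) fst (borel :: (real^'d) measure)"
  have fstm: "fst \<in> (borel :: ((real^'d) \<times> (real^'d)) measure) \<rightarrow>\<^sub>M borel"
    unfolding borel_prod[symmetric] by measurable
  have sndm: "snd \<in> (borel :: ((real^'d) \<times> (real^'d)) measure) \<rightarrow>\<^sub>M borel"
    unfolding borel_prod[symmetric] by measurable
  have setsN: "sets N = sets borel" unfolding N_def by simp
  have spN: "space N = UNIV" unfolding N_def by simp
  have PN: "prob_space N" unfolding N_def by (rule prob_space_distr[OF WX])
  have setsF: "sets F = {fst -` A \<inter> UNIV | A. A \<in> sets borel}"
    unfolding F_def by (rule sets_vimage_algebra2) simp
  have sub: "subalgebra N F"
    unfolding subalgebra_def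
  proof
    show "space F = space N" by (simp add: F_def spN)
    show "sets F \<subseteq> sets N" unfolding setsF setsN
      using measurable_sets[OF fstm] by auto
  qed
  have fact: "g (w, x) = g (w, 0)" if gF: "g \<in> borel_measurable F" for g :: "(real^'d) \<times> (real^'d) \<Rightarrow> real" and w x
  proof -
    have "g -` {g (w, x)} \<inter> space F \<in> sets F" using gF by (rule measurable_sets) simp
    then obtain A where "g -` {g (w, x)} \<inter> space F = fst -` A \<inter> UNIV" unfolding setsF by blast
    then have "g -` {g (w, x)} = fst -` A" by (simp add: F_def)
    then have "(w, x) \<in> fst -` A" by blast
    then have "(w, 0) \<in> g -` {g (w, x)}" using \<open>g -` {g (w, x)} = fst -` A\<close> by simp
    then show ?thesis by simp
  qed
  define m where "m c = real_cond_exp N F (\<lambda>p. snd p $ c)" for c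
  define h where "h w = (\<chi> c. m c (w, 0))" for w
  have mF: "m c \<in> borel_measurable F" for c unfolding m_def by simp
  have mN: "m c \<in> borel_measurable (borel :: ((real^'d) \<times> (real^'d)) measure)" for c
    using borel_measurable_cond_exp2[of N F] measurable_cong_sets[OF setsN refl] unfolding m_def by blast
  have mh: "m c (w, x) = h w $ c" for c w x unfolding h_def using fact[OF mF] by simp
  have pm: "(\<lambda>w::real^'d. (w, 0::real^'d)) \<in> borel \<rightarrow>\<^sub>M borel"
    by (intro borel_measurable_continuous_onI continuous_intros)
  have hm[measurable]: "h \<in> borel_measurable borel"
    unfolding h_def by (rule vec_meas) (simp, rule measurable_compose[OF pm mN])
  have key: "integrable M (\<lambda>\<omega>. (X \<omega> $ c - h (W \<omega>) $ c)\<^sup>2) \<and>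
       (\<integral>\<omega>. (X \<omega> $ c - h (W \<omega>) $ c)\<^sup>2 \<partial>M) \<le> (\<integral>\<omega>. (X \<omega> $ c - g (W \<omega>) $ c)\<^sup>2 \<partial>M)"
    if gm[measurable]: "g \<in> borel_measurable borel" and gi: "integrable M (\<lambda>\<omega>. (norm (X \<omega> - g (W \<omega>)))\<^sup>2)"
    for g :: "real^'d \<Rightarrow> real^'d" and c
  proof -
    have Ym: "(\<lambda>p::(real^'d) \<times> (real^'d). snd p $ c) \<in> borel_measurable N"
      unfolding measurable_cong_sets[OF setsN refl] using measurable_compose[OF sndm vec_nth_meas] .
    have gcm: "(\<lambda>p::(real^'d) \<times> (real^'d). (snd p $ c - g (fst p) $ c)\<^sup>2) \<in> borel_measurable borel"
      using measurable_compose[OF sndm vec_nth_meas] measurable_compose[OF measurable_compose[OF fstm gm] vec_nth_meas]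
      by measurable
    have Y2: "integrable N (\<lambda>p. (snd p $ c)\<^sup>2)"
      unfolding N_def
    proof (subst integrable_distr_eq[OF WX])
      show "(\<lambda>p::(real^'d) \<times> (real^'d). (snd p $ c)\<^sup>2) \<in> borel_measurable borel"
        using measurable_compose[OF sndm vec_nth_meas] by measurable
      show "integrable M (\<lambda>x. (snd (W x, X x) $ c)\<^sup>2)"
        by (rule Bochner_Integration.integrable_bound[OF X2]) (auto simp: comp_sq_le)
    qed
    have Gm: "(\<lambda>p::(real^'d) \<times> (real^'d). g (fst p) $ c) \<in> borel_measurable F"
      unfolding F_def by (rule measurable_compose[OF measurable_vimage_algebra1]) auto
    have YG: "integrable N (\<lambda>p. (snd p $ c - g (fst p) $ c)\<^sup>2)"
      unfolding N_def
    proof (subst integrable_distr_eq[OF WX gcm])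
      show "integrable M (\<lambda>x. (snd (W x, X x) $ c - g (fst (W x, X x)) $ c)\<^sup>2)"
        by (rule Bochner_Integration.integrable_bound[OF gi])
           (auto simp: comp_sq_le[of "X _ - g (W _)" c, simplified])
    qed
    note R = cond_exp_L2_opt[OF PN sub Ym Y2 Gm YG]
    have hcm: "(\<lambda>p::(real^'d) \<times> (real^'d). (snd p $ c - h (fst p) $ c)\<^sup>2) \<in> borel_measurable borel"
      using measurable_compose[OF sndm vec_nth_meas] measurable_compose[OF measurable_compose[OF fstm hm] vec_nth_meas]
      by measurable
    have e1: "(\<lambda>p. (snd p $ c - real_cond_exp N F (\<lambda>p. snd p $ c) p)\<^sup>2) = (\<lambda>p. (snd p $ c - h (fst p) $ c)\<^sup>2)"
      using mh unfolding m_def by (auto simp: fun_eq_iff)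
    have "integrable N (\<lambda>p. (snd p $ c - h (fst p) $ c)\<^sup>2)"
      using R(1) e1 by metis
    then have i1: "integrable M (\<lambda>\<omega>. (X \<omega> $ c - h (W \<omega>) $ c)\<^sup>2)"
      unfolding N_def integrable_distr_eq[OF WX hcm] by simp
    have "(\<integral>\<omega>. (X \<omega> $ c - h (W \<omega>) $ c)\<^sup>2 \<partial>M) = (\<integral>p. (snd p $ c - h (fst p) $ c)\<^sup>2 \<partial>N)"
      unfolding N_def by (subst integral_distr[OF WX hcm]) simp
    also have "\<dots> \<le> (\<integral>p. (snd p $ c - g (fst p) $ c)\<^sup>2 \<partial>N)" using R(2) e1 by metis
    also have "\<dots> = (\<integral>\<omega>. (X \<omega> $ c - g (W \<omega>) $ c)\<^sup>2 \<partial>M)"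
      unfolding N_def by (subst integral_distr[OF WX gcm]) simp
    finally show ?thesis using i1 by simp
  qed
  have h_int: "integrable M (\<lambda>\<omega>. (norm (X \<omega> - h (W \<omega>)))\<^sup>2)" if
    gm: "g \<in> borel_measurable borel" and gi: "integrable M (\<lambda>\<omega>. (norm (X \<omega> - g (W \<omega>)))\<^sup>2)" for g
    unfolding normsq_vec using key[OF gm gi] by simp
  have zero_int: "integrable M (\<lambda>\<omega>. (norm (X \<omega> - (\<lambda>_. 0) (W \<omega>)))\<^sup>2)" using X2 by simp
  have hi: "integrable M (\<lambda>\<omega>. (norm (X \<omega> - h (W \<omega>)))\<^sup>2)" by (rule h_int[OF _ zero_int]) simp
  have "optimal_denoiser M X W h"
    unfolding optimal_denoiser_def
  proof (intro conjI ballI impI hm hi)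
    fix g :: "real^'d \<Rightarrow> real^'d" assume gm: "g \<in> borel_measurable borel"
      and gi: "integrable M (\<lambda>\<omega>. (norm (X \<omega> - g (W \<omega>)))\<^sup>2)"
    have "(\<integral>\<omega>. (norm (X \<omega> - h (W \<omega>)))\<^sup>2 \<partial>M) = (\<Sum>c\<in>UNIV. \<integral>\<omega>. (X \<omega> $ c - h (W \<omega>) $ c)\<^sup>2 \<partial>M)"
      unfolding normsq_vec using key[OF gm gi] by (simp add: Bochner_Integration.integral_sum)
    also have "\<dots> \<le> (\<Sum>c\<in>UNIV. \<integral>\<omega>. (X \<omega> $ c - g (W \<omega>) $ c)\<^sup>2 \<partial>M)"
      using key[OF gm gi] by (intro sum_mono) simp
    also have "\<dots> = (\<integral>\<omega>. (norm (X \<omega> - g (W \<omega>)))\<^sup>2 \<partial>M)"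
    proof -
      have "integrable M (\<lambda>\<omega>. (X \<omega> $ c - g (W \<omega>) $ c)\<^sup>2)" for c
        by (rule Bochner_Integration.integrable_bound[OF gi])
           (use gm in \<open>auto simp: comp_sq_le[of "X _ - g (W _)" c, simplified]\<close>)
      then show ?thesis unfolding normsq_vec by (simp add: Bochner_Integration.integral_sum)
    qed
    finally show "(\<integral>\<omega>. (norm (X \<omega> - h (W \<omega>)))\<^sup>2 \<partial>M) \<le> (\<integral>\<omega>. (norm (X \<omega> - g (W \<omega>)))\<^sup>2 \<partial>M)" .
  qed
  then show ?thesis by blast
qed

definition combv :: "'d set \<Rightarrow> real ^ 'd \<Rightarrow> real ^ 'd \<Rightarrow> real ^ 'd" where
  "combv B y z = (\<chi> i. if i \<in> B then z $ i else y $ i)"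

lemma combv_nth: "combv B y z $ i = (if i \<in> B then z $ i else y $ i)"
  by (simp add: combv_def)

lemma combv_meas[measurable]:
  fixes f g :: "'a \<Rightarrow> real ^ 'd::finite"
  assumes [measurable]: "f \<in> borel_measurable N" "g \<in> borel_measurable N"
  shows "(\<lambda>x. combv B (f x) (g x)) \<in> borel_measurable N"
proof (rule vec_meas)
  fix c
  have [measurable]: "(\<lambda>x. f x $ c) \<in> borel_measurable N" "(\<lambda>x. g x $ c) \<in> borel_measurable N"
    using measurable_compose[OF assms(1) vec_nth_meas] measurable_compose[OF assms(2) vec_nth_meas] by auto
  show "(\<lambda>x. combv B (f x) (g x) $ c) \<in> borel_measurable N"
    by (cases "c \<in> B") (simp_all add: combv_nth)
qed

lemma combv_combv: "combv B (combv B y q) q' = combv B y q'"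
  by (simp add: combv_def vec_eq_iff)

lemma var_ineq:
  fixes u :: "'a \<Rightarrow> real"
  assumes P: "prob_space M" and u1: "integrable M u" and u2: "integrable M (\<lambda>x. (u x)\<^sup>2)"
  shows "(\<integral>x. u x \<partial>M)\<^sup>2 \<le> (\<integral>x. (u x)\<^sup>2 \<partial>M)"
proof -
  interpret prob_space M by (rule P)
  define m where "m = (\<integral>x. u x \<partial>M)"
  have pt: "\<And>x. (u x - m)\<^sup>2 = (u x)\<^sup>2 - 2 * m * u x + m\<^sup>2" by (simp add: power2_diff)
  have "0 \<le> (\<integral>x. (u x - m)\<^sup>2 \<partial>M)" by simp
  also have "\<dots> = (\<integral>x. (u x)\<^sup>2 \<partial>M) - 2 * m * m + m\<^sup>2"
    unfolding pt using u1 u2 by (simp add: prob_space m_def)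
  finally show ?thesis unfolding m_def by (simp add: power2_eq_square)
qed

lemma jensen_vec:
  fixes U :: "'a \<Rightarrow> real ^ 'd::finite"
  assumes P: "prob_space M" and Um[measurable]: "U \<in> borel_measurable M"
  shows "ennreal ((norm (x - (\<chi> c. \<integral>\<omega>. U \<omega> $ c \<partial>M)))\<^sup>2) \<le> (\<integral>\<^sup>+\<omega>. ennreal ((norm (x - U \<omega>))\<^sup>2) \<partial>M)"
proof (cases "(\<integral>\<^sup>+\<omega>. ennreal ((norm (x - U \<omega>))\<^sup>2) \<partial>M) = \<infinity>")
  case True
  then show ?thesis by simp
next
  case False
  interpret prob_space M by (rule P)
  have I: "integrable M (\<lambda>\<omega>. (norm (x - U \<omega>))\<^sup>2)"
    by (rule integrableI_nonneg) (use False in \<open>auto simp: top.not_eq_extremum\<close>)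
  have Uc[measurable]: "(\<lambda>\<omega>. U \<omega> $ c) \<in> borel_measurable M" for c
    using measurable_compose[OF Um vec_nth_meas] .
  have Ic: "integrable M (\<lambda>\<omega>. (x $ c - U \<omega> $ c)\<^sup>2)" for c
    by (rule Bochner_Integration.integrable_bound[OF I])
       (auto simp: comp_sq_le[of "x - U _" c, simplified])
  have I1: "integrable M (\<lambda>\<omega>. x $ c - U \<omega> $ c)" for c
    by (rule L2_imp_L1) (auto simp: Ic)
  then have IU: "integrable M (\<lambda>\<omega>. U \<omega> $ c)" for c
  proof -
    have "integrable M (\<lambda>\<omega>. x $ c - (x $ c - U \<omega> $ c))"
      by (intro Bochner_Integration.integrable_diff I1) simp
    moreover have "(\<lambda>\<omega>. x $ c - (x $ c - U \<omega> $ c)) = (\<lambda>\<omega>. U \<omega> $ c)" by simp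
    ultimately show ?thesis by metis
  qed
  have "(norm (x - (\<chi> c. \<integral>\<omega>. U \<omega> $ c \<partial>M)))\<^sup>2 = (\<Sum>c\<in>UNIV. (\<integral>\<omega>. (x $ c - U \<omega> $ c) \<partial>M)\<^sup>2)"
    unfolding normsq_vec using IU by (simp add: prob_space)
  also have "\<dots> \<le> (\<Sum>c\<in>UNIV. \<integral>\<omega>. (x $ c - U \<omega> $ c)\<^sup>2 \<partial>M)"
    by (intro sum_mono var_ineq[OF P I1 Ic])
  also have "\<dots> = (\<integral>\<omega>. (norm (x - U \<omega>))\<^sup>2 \<partial>M)"
    unfolding normsq_vec using Ic by (simp add: Bochner_Integration.integral_sum)
  finally have "ennreal ((norm (x - (\<chi> c. \<integral>\<omega>. U \<omega> $ c \<partial>M)))\<^sup>2) \<le> ennreal (\<integral>\<omega>. (norm (x - U \<omega>))\<^sup>2 \<partial>M)"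
    by (rule ennreal_leI)
  also have "\<dots> = (\<integral>\<^sup>+\<omega>. ennreal ((norm (x - U \<omega>))\<^sup>2) \<partial>M)"
    by (rule nn_integral_eq_integral[symmetric]) (auto simp: I)
  finally show ?thesis .
qed

lemma vec_nth_meas2[measurable]:
  fixes f :: "'a \<Rightarrow> real ^ 'd::finite"
  shows "f \<in> borel_measurable N \<Longrightarrow> (\<lambda>x. f x $ c) \<in> borel_measurable N"
  using measurable_compose[OF _ vec_nth_meas] by blast

lemma averaging:
  fixes X R Q Xt :: "'a \<Rightarrow> real ^ 'd::finite" and h0 :: "real ^ 'd \<Rightarrow> real ^ 'd"
    and xt2 :: "real ^ 'd \<Rightarrow> real ^ 'd \<Rightarrow> real ^ 'd"
  assumes P: "prob_space M"
    and Xm[measurable]: "X \<in> borel_measurable M" and Rm[measurable]: "R \<in> borel_measurable M"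
    and Qm[measurable]: "Q \<in> borel_measurable M" and Xtm[measurable]: "Xt \<in> borel_measurable M"
    and xt2m: "(\<lambda>p. xt2 (fst p) (snd p)) \<in> borel_measurable (borel \<Otimes>\<^sub>M borel)"
    and Xt_eq: "\<And>\<omega>. Xt \<omega> = combv B (xt2 (X \<omega>) (R \<omega>)) (Q \<omega>)"
    and ind: "prob_space.indep_var M (borel \<Otimes>\<^sub>M borel) (\<lambda>\<omega>. (X \<omega>, R \<omega>)) (borel \<Otimes>\<^sub>M borel) (\<lambda>\<omega>. (Q \<omega>, 0))"
    and opt: "optimal_denoiser M X Xt h0"
  shows "optimal_denoiser M X Xt (\<lambda>w. \<chi> c. \<integral>\<omega>. h0 (combv B w (Q \<omega>)) $ c \<partial>M)"
proof -
  interpret prob_space M by (rule P)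
  define f where "f w = (\<chi> c. \<integral>\<omega>. h0 (combv B w (Q \<omega>)) $ c \<partial>M)" for w
  have h0m[measurable]: "h0 \<in> borel_measurable borel" using opt unfolding optimal_denoiser_def by blast
  have h0i: "integrable M (\<lambda>\<omega>. (norm (X \<omega> - h0 (Xt \<omega>)))\<^sup>2)"
    using opt unfolding optimal_denoiser_def by blast
  have fm[measurable]: "f \<in> borel_measurable borel"
    unfolding f_def by (rule vec_meas) simp
  have fcomb: "f (combv B y q) = f y" for y q unfolding f_def by (simp add: combv_combv)
  let ?S = "borel \<Otimes>\<^sub>M borel :: ((real ^ 'd) \<times> (real ^ 'd)) measure"
  define V where "V \<omega> = (X \<omega>, R \<omega>)" for \<omega>
  define Wv where "Wv \<omega> = (Q \<omega>, 0 :: real ^ 'd)" for \<omega>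
  have Vm[measurable]: "V \<in> M \<rightarrow>\<^sub>M ?S" unfolding V_def by measurable
  have Wm[measurable]: "Wv \<in> M \<rightarrow>\<^sub>M ?S" unfolding Wv_def by measurable
  define \<mu>V where "\<mu>V = distr M ?S V"
  define \<mu>W where "\<mu>W = distr M ?S Wv"
  interpret W: prob_space \<mu>W unfolding \<mu>W_def by (rule prob_space_distr) simp
  have D: "\<mu>V \<Otimes>\<^sub>M \<mu>W = distr M (?S \<Otimes>\<^sub>M ?S) (\<lambda>\<omega>. (V \<omega>, Wv \<omega>))"
    using ind unfolding indep_var_distribution_eq \<mu>V_def \<mu>W_def V_def Wv_def by simp
  have xt2m'[measurable]: "(\<lambda>p. xt2 (fst (fst p)) (snd (fst p))) \<in> borel_measurable (?S \<Otimes>\<^sub>M ?S)"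
    by (rule measurable_compose[OF measurable_fst xt2m])
  define \<Phi> where "\<Phi> p = ennreal ((norm (fst (fst p) - h0 (combv B (xt2 (fst (fst p)) (snd (fst p))) (fst (snd p)))))\<^sup>2)"
    for p :: "((real ^ 'd) \<times> (real ^ 'd)) \<times> ((real ^ 'd) \<times> (real ^ 'd))"
  have \<Phi>m[measurable]: "\<Phi> \<in> borel_measurable (?S \<Otimes>\<^sub>M ?S)" unfolding \<Phi>_def by measurable
  have setsVW: "sets (\<mu>V \<Otimes>\<^sub>M \<mu>W) = sets (?S \<Otimes>\<^sub>M ?S)"
    unfolding \<mu>V_def \<mu>W_def by (intro sets_pair_measure_cong) simp_all
  have \<Phi>m': "\<Phi> \<in> borel_measurable (\<mu>V \<Otimes>\<^sub>M \<mu>W)"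
    using \<Phi>m measurable_cong_sets[OF setsVW refl] by blast
  have inner: "ennreal ((norm (fst v - f (xt2 (fst v) (snd v))))\<^sup>2) \<le> (\<integral>\<^sup>+w. \<Phi> (v, w) \<partial>\<mu>W)" for v
  proof -
    have m1: "(\<lambda>w. \<Phi> (v, w)) \<in> borel_measurable ?S"
      by (rule measurable_Pair2[OF \<Phi>m]) (simp add: space_pair_measure)
    have "(\<integral>\<^sup>+w. \<Phi> (v, w) \<partial>\<mu>W) = (\<integral>\<^sup>+\<omega>. \<Phi> (v, Wv \<omega>) \<partial>M)"
      unfolding \<mu>W_def by (rule nn_integral_distr[OF Wm]) (simp add: m1)
    also have "\<dots> = (\<integral>\<^sup>+\<omega>. ennreal ((norm (fst v - h0 (combv B (xt2 (fst v) (snd v)) (Q \<omega>))))\<^sup>2) \<partial>M)"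
      by (simp add: \<Phi>_def Wv_def)
    also have "\<dots> \<ge> ennreal ((norm (fst v - f (xt2 (fst v) (snd v))))\<^sup>2)"
      unfolding f_def by (rule jensen_vec[OF P]) measurable
    finally show ?thesis .
  qed
  have "(\<integral>\<^sup>+\<omega>. ennreal ((norm (X \<omega> - f (Xt \<omega>)))\<^sup>2) \<partial>M)
      = (\<integral>\<^sup>+\<omega>. ennreal ((norm (X \<omega> - f (xt2 (X \<omega>) (R \<omega>))))\<^sup>2) \<partial>M)"
    by (simp add: Xt_eq fcomb)
  also have "\<dots> = (\<integral>\<^sup>+v. ennreal ((norm (fst v - f (xt2 (fst v) (snd v))))\<^sup>2) \<partial>\<mu>V)"
  proof -
    have mm: "(\<lambda>v. ennreal ((norm (fst v - f (xt2 (fst v) (snd v))))\<^sup>2)) \<in> borel_measurable ?S"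
      using xt2m by measurable
    show ?thesis unfolding \<mu>V_def by (subst nn_integral_distr[OF Vm]) (simp_all add: mm V_def)
  qed
  also have "\<dots> \<le> (\<integral>\<^sup>+v. \<integral>\<^sup>+w. \<Phi> (v, w) \<partial>\<mu>W \<partial>\<mu>V)"
    by (intro nn_integral_mono inner)
  also have "\<dots> = (\<integral>\<^sup>+p. \<Phi> p \<partial>(\<mu>V \<Otimes>\<^sub>M \<mu>W))"
    by (rule W.nn_integral_fst[OF \<Phi>m'])
  also have "\<dots> = (\<integral>\<^sup>+p. \<Phi> p \<partial>(distr M (?S \<Otimes>\<^sub>M ?S) (\<lambda>\<omega>. (V \<omega>, Wv \<omega>))))"
    unfolding D ..
  also have "\<dots> = (\<integral>\<^sup>+\<omega>. \<Phi> (V \<omega>, Wv \<omega>) \<partial>M)"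
    by (rule nn_integral_distr) simp_all
  also have "\<dots> = (\<integral>\<^sup>+\<omega>. ennreal ((norm (X \<omega> - h0 (Xt \<omega>)))\<^sup>2) \<partial>M)"
    by (simp add: \<Phi>_def V_def Wv_def Xt_eq)
  also have "\<dots> = ennreal (\<integral>\<omega>. (norm (X \<omega> - h0 (Xt \<omega>)))\<^sup>2 \<partial>M)"
    by (rule nn_integral_eq_integral[OF h0i]) simp
  finally have le: "(\<integral>\<^sup>+\<omega>. ennreal ((norm (X \<omega> - f (Xt \<omega>)))\<^sup>2) \<partial>M) \<le> ennreal (\<integral>\<omega>. (norm (X \<omega> - h0 (Xt \<omega>)))\<^sup>2 \<partial>M)" .
  have fi: "integrable M (\<lambda>\<omega>. (norm (X \<omega> - f (Xt \<omega>)))\<^sup>2)"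
    by (rule integrableI_nonneg) (use le in \<open>auto simp: le_less_trans\<close>)
  have fle: "(\<integral>\<omega>. (norm (X \<omega> - f (Xt \<omega>)))\<^sup>2 \<partial>M) \<le> (\<integral>\<omega>. (norm (X \<omega> - h0 (Xt \<omega>)))\<^sup>2 \<partial>M)"
    using le nn_integral_eq_integral[OF fi] by simp
  have "optimal_denoiser M X Xt f"
    unfolding optimal_denoiser_def
  proof (intro conjI ballI impI fm fi)
    fix g :: "real^'d \<Rightarrow> real^'d" assume "g \<in> borel_measurable borel"
      and "integrable M (\<lambda>\<omega>. (norm (X \<omega> - g (Xt \<omega>)))\<^sup>2)"
    then have "(\<integral>\<omega>. (norm (X \<omega> - h0 (Xt \<omega>)))\<^sup>2 \<partial>M) \<le> (\<integral>\<omega>. (norm (X \<omega> - g (Xt \<omega>)))\<^sup>2 \<partial>M)"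
      using opt unfolding optimal_denoiser_def by blast
    then show "(\<integral>\<omega>. (norm (X \<omega> - f (Xt \<omega>)))\<^sup>2 \<partial>M) \<le> (\<integral>\<omega>. (norm (X \<omega> - g (Xt \<omega>)))\<^sup>2 \<partial>M)"
      using fle by linarith
  qed
  then show ?thesis unfolding f_def .
qed

theorem proposition3:
  fixes M :: "'a measure"
    and X Z :: "'a \<Rightarrow> real ^ 'd::finite"
    and S :: "nat \<Rightarrow> 'd set" and k :: nat
    and ts te :: "nat \<Rightarrow> real"
    and t :: real and j :: nat
  assumes "prob_space M"
    and X_rv: "X \<in> borel_measurable M"
    and X_L2: "integrable M (\<lambda>\<omega>. (norm (X \<omega>))\<^sup>2)"
    and Z_rv: "Z \<in> borel_measurable M"
    and Z_gauss: "\<And>i. distributed M lborel (\<lambda>\<omega>. Z \<omega> $ i) (\<lambda>x. ennreal (std_normal_density x))"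
    and Z_indep_coords: "prob_space.indep_vars M (\<lambda>_. borel) (\<lambda>i \<omega>. Z \<omega> $ i) UNIV"
    and XZ_indep: "prob_space.indep_var M borel X borel Z"
    and S_nonempty: "\<And>j. j < k \<Longrightarrow> S j \<noteq> {}"
    and S_disjoint: "\<And>j j'. j < k \<Longrightarrow> j' < k \<Longrightarrow> j \<noteq> j' \<Longrightarrow> S j \<inter> S j' = {}"
    and S_cover: "(\<Union>j<k. S j) = UNIV"
    and ts_nonneg: "\<And>j. j < k \<Longrightarrow> 0 \<le> ts j"
    and ts_te: "\<And>j. j < k \<Longrightarrow> ts j < te j"
    and no_overlap: "\<And>j j'. j < k \<Longrightarrow> j' < k \<Longrightarrow> j \<noteq> j' \<Longrightarrow>
                        {ts j..te j} \<inter> {ts j'..te j'} = {}"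
    and j_lt: "j < k"
    and te_lt_t: "te j < t"
  shows "\<exists>f. optimal_denoiser M X (\<lambda>\<omega>. gw_xt S k ts te t (X \<omega>) (Z \<omega>)) f \<and>
             (\<forall>y. \<forall>i \<in> S j. ((\<lambda>s. f (y + s *\<^sub>R axis i 1)) has_vector_derivative 0) (at 0))"
proof -
  interpret prob_space M by fact
  define B where "B = S j"
  define dropv where "dropv z = (\<chi> i. if i \<in> B then 0 else z $ i)" for z :: "real ^ 'd"
  define keepv where "keepv z = (\<chi> i. if i \<in> B then z $ i else 0)" for z :: "real ^ 'd"
  define toV where "toV J g = (\<chi> i. if i \<in> J then g i else 0)" for J and g :: "'d \<Rightarrow> real"
  define R where "R \<omega> = dropv (Z \<omega>)" for \<omega>
  define Q where "Q \<omega> = keepv (Z \<omega>)" for \<omega>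
  define xt2 where "xt2 = gw_xt S k ts te t"
  define a where "a i = gw_coef (ts (grp_of S k i)) (te (grp_of S k i)) t" for i
  have a0: "a i = 0" if "i \<in> B" for i
  proof -
    have "grp_of S k i = j" using grp_of_eq[OF j_lt _ S_disjoint] that B_def by simp
    moreover have "ts j < te j" using ts_te[OF j_lt] .
    ultimately show ?thesis using te_lt_t unfolding a_def gw_coef_def by auto
  qed
  have xt2_nth: "xt2 x z $ i = a i * x $ i + (1 - a i) * z $ i" for x z i
    unfolding xt2_def a_def by (rule gw_xt_nth)
  have [measurable]: "Z \<in> borel_measurable M" "X \<in> borel_measurable M" using Z_rv X_rv by auto
  have dropm[measurable]: "dropv \<in> borel_measurable borel"
  proof (rule vec_meas)
    fix c show "(\<lambda>z. dropv z $ c) \<in> borel_measurable borel"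
      by (cases "c \<in> B") (simp_all add: dropv_def)
  qed
  have keepm[measurable]: "keepv \<in> borel_measurable borel"
  proof (rule vec_meas)
    fix c show "(\<lambda>z. keepv z $ c) \<in> borel_measurable borel"
      by (cases "c \<in> B") (simp_all add: keepv_def)
  qed
  have toVm: "toV J \<in> PiM J (\<lambda>_. borel) \<rightarrow>\<^sub>M borel" for J
  proof (rule vec_meas)
    fix c show "(\<lambda>g. toV J g $ c) \<in> borel_measurable (PiM J (\<lambda>_. borel))"
      by (cases "c \<in> J") (simp_all add: toV_def measurable_component_singleton)
  qed
  have Rm[measurable]: "R \<in> borel_measurable M" unfolding R_def by measurable
  have Qm[measurable]: "Q \<in> borel_measurable M" unfolding Q_def by measurable
  have xt2m: "(\<lambda>p. xt2 (fst p) (snd p)) \<in> borel_measurable (borel \<Otimes>\<^sub>M borel)"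
  proof (rule vec_meas)
    fix c show "(\<lambda>p::(real^'d) \<times> (real^'d). xt2 (fst p) (snd p) $ c) \<in> borel_measurable (borel \<Otimes>\<^sub>M borel)"
      unfolding xt2_nth by measurable
  qed
  define Xt where "Xt \<omega> = gw_xt S k ts te t (X \<omega>) (Z \<omega>)" for \<omega>
  have Xt_eq: "Xt \<omega> = combv B (xt2 (X \<omega>) (R \<omega>)) (Q \<omega>)" for \<omega>
    unfolding vec_eq_iff
  proof
    fix i
    show "Xt \<omega> $ i = combv B (xt2 (X \<omega>) (R \<omega>)) (Q \<omega>) $ i"
      using a0[of i] unfolding Xt_def xt2_def[symmetric]
      by (cases "i \<in> B") (simp_all add: combv_nth xt2_nth R_def Q_def dropv_def keepv_def)
  qed
  have Xtm[measurable]: "Xt \<in> borel_measurable M"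
  proof (rule vec_meas)
    fix c show "(\<lambda>\<omega>. Xt \<omega> $ c) \<in> borel_measurable M"
      unfolding Xt_def xt2_def[symmetric] xt2_nth by measurable
  qed
  have h2: "indep_var borel R borel Q"
  proof -
    have r: "indep_var (PiM (- B) (\<lambda>_. borel)) (\<lambda>\<omega>. restrict (\<lambda>i. Z \<omega> $ i) (- B))
                       (PiM B (\<lambda>_. borel)) (\<lambda>\<omega>. restrict (\<lambda>i. Z \<omega> $ i) B)"
      by (rule indep_var_restrict[OF Z_indep_coords]) auto
    have c: "indep_var borel (toV (- B) \<circ> (\<lambda>\<omega>. restrict (\<lambda>i. Z \<omega> $ i) (- B)))
                        borel (toV B \<circ> (\<lambda>\<omega>. restrict (\<lambda>i. Z \<omega> $ i) B))"
      by (rule indep_var_compose[OF r toVm toVm])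
    have e1: "toV (- B) \<circ> (\<lambda>\<omega>. restrict (\<lambda>i. Z \<omega> $ i) (- B)) = R"
      by (auto simp: fun_eq_iff vec_eq_iff toV_def R_def dropv_def)
    have e2: "toV B \<circ> (\<lambda>\<omega>. restrict (\<lambda>i. Z \<omega> $ i) B) = Q"
      by (auto simp: fun_eq_iff vec_eq_iff toV_def Q_def keepv_def)
    show ?thesis using c unfolding e1 e2 .
  qed
  have h1: "indep_var (borel \<Otimes>\<^sub>M borel) (\<lambda>\<omega>. (X \<omega>, 0::real^'d)) (borel \<Otimes>\<^sub>M borel) (\<lambda>\<omega>. (R \<omega>, Q \<omega>))"
  proof -
    have m1: "(\<lambda>x::real^'d. (x, 0::real^'d)) \<in> borel \<rightarrow>\<^sub>M borel \<Otimes>\<^sub>M borel" by measurable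
    have m2: "(\<lambda>z. (dropv z, keepv z)) \<in> borel \<rightarrow>\<^sub>M borel \<Otimes>\<^sub>M borel" by measurable
    have "indep_var (borel \<Otimes>\<^sub>M borel) ((\<lambda>x::real^'d. (x, 0::real^'d)) \<circ> X) (borel \<Otimes>\<^sub>M borel) ((\<lambda>z. (dropv z, keepv z)) \<circ> Z)"
      by (rule indep_var_compose[OF XZ_indep m1 m2])
    then show ?thesis by (simp add: o_def R_def Q_def)
  qed
  have ind: "indep_var (borel \<Otimes>\<^sub>M borel) (\<lambda>\<omega>. (X \<omega>, R \<omega>)) (borel \<Otimes>\<^sub>M borel) (\<lambda>\<omega>. (Q \<omega>, 0))"
    by (rule indep_pair_assoc[OF \<open>prob_space M\<close> _ h1 h2]) simp
  obtain h0 where h0: "optimal_denoiser M X Xt h0"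
    using exists_opt[OF \<open>prob_space M\<close> X_rv X_L2 Xtm] by blast
  define f where "f w = (\<chi> c. \<integral>\<omega>. h0 (combv B w (Q \<omega>)) $ c \<partial>M)" for w
  have opt: "optimal_denoiser M X Xt f"
    unfolding f_def
    by (rule averaging[OF \<open>prob_space M\<close> X_rv Rm Qm Xtm xt2m Xt_eq ind h0])
  have deriv: "((\<lambda>s. f (y + s *\<^sub>R axis i 1)) has_vector_derivative 0) (at 0)" if "i \<in> S j" for y i
  proof -
    have "combv B (y + s *\<^sub>R axis i 1) q = combv B y q" for s q
      using that unfolding B_def by (auto simp: vec_eq_iff combv_nth axis_def)
    then have "(\<lambda>s. f (y + s *\<^sub>R axis i 1)) = (\<lambda>s. f y)" unfolding f_def by simp
    then show ?thesis by (simp add: has_vector_derivative_const)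
  qed
  show ?thesis
    using opt deriv unfolding Xt_def by blast
qed

end
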